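(* Let $D_K$ be a relative $K$-entropy satisfying Properties (a), (b), (c) and (d) below, and let $H_K$ be the associated conditional entropy, defined by one of the two forms below. Then (i) $H_K(A|B)=0$ for every state of the form $\rho_{AB}=|\psi\rangle\langle\psi|_A\otimes\rho_B$ with $|\psi\rangle$ a unit vector; and (ii) $H_K(A|B)\le\log d_A$ for every density operator $\rho_{AB}$, where $d_A=\dim\mathcal{H}_A$.
   Context: All Hilbert spaces are finite-dimensional; $\log$ has an arbitrary but fixed base. A relative $K$-entropy $D_K$ assigns to every pair $(S,T)$ of positive semidefinite operators on a common Hilbert space an extended real number $D_K(S\|T)$. Properties: (a) for every trace-preserving completely positive map $\mathcal{E}$ (possibly between different spaces), $D_K(\mathcal{E}(S)\|\mathcal{E}(T))\le D_K(S\|T)$; (b) for positive semidefinite $S,T$ on $\mathcal{H}$ and $T'$ on $\mathcal{H}'$, $D_K(S\oplus 0\,\|\,T\oplus T')=D_K(S\|T)$; (c) for every constant $c>0$, $D_K(S\|cT)=D_K(S\|T)+\log\frac1c$; (d) $D_K(\rho\|\rho)=0$ for every density operator $\rho$. The conditional $K$-entropy of a density operator $\rho_{AB}$ is either $H_K(A|B)=-D_K(\rho_{AB}\|\mathbb{1}_A\otimes\rho_B)$ for all $\rho_{AB}$, or $H_K(A|B)=\max_{\sigma_B}[-D_K(\rho_{AB}\|\mathbb{1}_A\otimes\sigma_B)]$ for all $\rho_{AB}$, maximum over density operators $\sigma_B$. *)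

theory Defs
  imports Complex_Main "HOL-Library.Extended_Real" "Jordan_Normal_Form.Matrix"
begin

definition psd :: "nat \<Rightarrow> complex mat \<Rightarrow> bool" where
  "psd n A \<longleftrightarrow> A \<in> carrier_mat n n \<and>
     (\<forall>v \<in> carrier_vec n.
        (let q = (\<Sum>i<n. \<Sum>j<n. cnj (v $ i) * A $$ (i, j) * v $ j)
         in Im q = 0 \<and> Re q \<ge> 0))"

definition mtrace :: "complex mat \<Rightarrow> complex" where
  "mtrace A = (\<Sum>i<dim_row A. A $$ (i, i))"

definition density :: "nat \<Rightarrow> complex mat \<Rightarrow> bool" where
  "density n \<rho> \<longleftrightarrow> psd n \<rho> \<and> mtrace \<rho> = 1"

text \<open>Kronecker (tensor) product, first factor's index is the major one.\<close>
definition kron :: "complex mat \<Rightarrow> complex mat \<Rightarrow> complex mat" where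
  "kron A B = mat (dim_row A * dim_row B) (dim_col A * dim_col B)
     (\<lambda>(i, j). A $$ (i div dim_row B, j div dim_col B) * B $$ (i mod dim_row B, j mod dim_col B))"

definition dsum :: "complex mat \<Rightarrow> complex mat \<Rightarrow> complex mat" where
  "dsum S T = four_block_mat S (0\<^sub>m (dim_row S) (dim_col T)) (0\<^sub>m (dim_row T) (dim_col S)) T"

definition blk :: "nat \<Rightarrow> complex mat \<Rightarrow> nat \<Rightarrow> nat \<Rightarrow> complex mat" where
  "blk n Y a b = mat n n (\<lambda>(p, q). Y $$ (a * n + p, b * n + q))"

text \<open>(id_k tensor E) applied to a (k n) x (k n) matrix, E mapping n x n to m x m matrices.\<close>
definition ampl :: "nat \<Rightarrow> nat \<Rightarrow> nat \<Rightarrow> (complex mat \<Rightarrow> complex mat) \<Rightarrow> complex mat \<Rightarrow> complex mat" where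
  "ampl k n m E Y = mat (k * m) (k * m)
     (\<lambda>(i, j). E (blk n Y (i div m) (j div m)) $$ (i mod m, j mod m))"

definition cptp :: "nat \<Rightarrow> nat \<Rightarrow> (complex mat \<Rightarrow> complex mat) \<Rightarrow> bool" where
  "cptp n m E \<longleftrightarrow>
     (\<forall>X \<in> carrier_mat n n. E X \<in> carrier_mat m m) \<and>
     (\<forall>X \<in> carrier_mat n n. \<forall>Y \<in> carrier_mat n n. E (X + Y) = E X + E Y) \<and>
     (\<forall>c. \<forall>X \<in> carrier_mat n n. E (c \<cdot>\<^sub>m X) = c \<cdot>\<^sub>m E X) \<and>
     (\<forall>X \<in> carrier_mat n n. mtrace (E X) = mtrace X) \<and>
     (\<forall>k. \<forall>Y. psd (k * n) Y \<longrightarrow> psd (k * m) (ampl k n m E Y))"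

text \<open>Axioms (a)-(d) of a relative K-entropy with logarithm base b.
  D is only constrained on pairs of PSD operators on a common (nonzero) space.\<close>
definition rel_K_entropy :: "real \<Rightarrow> (complex mat \<Rightarrow> complex mat \<Rightarrow> ereal) \<Rightarrow> bool" where
  "rel_K_entropy b D \<longleftrightarrow>
     (\<forall>n m E S T. 0 < n \<longrightarrow> cptp n m E \<longrightarrow> psd n S \<longrightarrow> psd n T \<longrightarrow>
         D (E S) (E T) \<le> D S T) \<and>
     (\<forall>n m S T T'. 0 < n \<longrightarrow> psd n S \<longrightarrow> psd n T \<longrightarrow> psd m T' \<longrightarrow>
         D (dsum S (0\<^sub>m m m)) (dsum T T') = D S T) \<and>
     (\<forall>n S T (c::real). 0 < n \<longrightarrow> psd n S \<longrightarrow> psd n T \<longrightarrow> c > 0 \<longrightarrow>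
         D S (complex_of_real c \<cdot>\<^sub>m T) = D S T + ereal (log b (1 / c))) \<and>
     (\<forall>n \<rho>. density n \<rho> \<longrightarrow> D \<rho> \<rho> = 0)"

definition ptrace_A :: "nat \<Rightarrow> nat \<Rightarrow> complex mat \<Rightarrow> complex mat" where
  "ptrace_A dA dB \<rho> = mat dB dB (\<lambda>(i, j). \<Sum>a<dA. \<rho> $$ (a * dB + i, a * dB + j))"

definition condK1 :: "(complex mat \<Rightarrow> complex mat \<Rightarrow> ereal) \<Rightarrow> nat \<Rightarrow> nat \<Rightarrow> complex mat \<Rightarrow> ereal" where
  "condK1 D dA dB \<rho> = - D \<rho> (kron (1\<^sub>m dA) (ptrace_A dA dB \<rho>))"

definition condK2 :: "(complex mat \<Rightarrow> complex mat \<Rightarrow> ereal) \<Rightarrow> nat \<Rightarrow> nat \<Rightarrow> complex mat \<Rightarrow> ereal" where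
  "condK2 D dA dB \<rho> = (SUP \<sigma> \<in> {\<sigma>. density dB \<sigma>}. - D \<rho> (kron (1\<^sub>m dA) \<sigma>))"

definition ketbra :: "complex vec \<Rightarrow> complex mat" where
  "ketbra \<psi> = mat (dim_vec \<psi>) (dim_vec \<psi>) (\<lambda>(i, j). \<psi> $ i * cnj (\<psi> $ j))"

end

theory Submission
  imports Defs
begin


definition qf :: "nat \<Rightarrow> complex mat \<Rightarrow> complex vec \<Rightarrow> complex" where
  "qf n A v = (\<Sum>i<n. \<Sum>j<n. cnj (v $ i) * A $$ (i, j) * v $ j)"

lemma psd_qf: "psd n A \<longleftrightarrow> A \<in> carrier_mat n n \<and> (\<forall>v\<in>carrier_vec n. Im (qf n A v) = 0 \<and> Re (qf n A v) \<ge> 0)"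
  unfolding psd_def qf_def Let_def by simp

definition kmap :: "nat \<Rightarrow> 'i set \<Rightarrow> ('i \<Rightarrow> nat \<Rightarrow> nat \<Rightarrow> complex) \<Rightarrow> nat \<Rightarrow> complex mat \<Rightarrow> complex mat" where
  "kmap n I K m X = mat m m (\<lambda>(s,t). \<Sum>r\<in>I. \<Sum>i<n. \<Sum>j<n. K r s i * X $$ (i,j) * cnj (K r t j))"

lemma kmap_carrier[simp]: "kmap n I K m X \<in> carrier_mat m m"
  unfolding kmap_def by simp

lemma kmap_index[simp]: "s < m \<Longrightarrow> t < m \<Longrightarrow> kmap n I K m X $$ (s,t) = (\<Sum>r\<in>I. \<Sum>i<n. \<Sum>j<n. K r s i * X $$ (i,j) * cnj (K r t j))"
  unfolding kmap_def by simp

lemma swap3: "(\<Sum>x\<in>A. \<Sum>y\<in>B. \<Sum>z\<in>C. f x y z) = (\<Sum>z\<in>C. \<Sum>x\<in>A. \<Sum>y\<in>B. f x y z)"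
proof -
  have "(\<Sum>x\<in>A. \<Sum>y\<in>B. \<Sum>z\<in>C. f x y z) = (\<Sum>x\<in>A. \<Sum>z\<in>C. \<Sum>y\<in>B. f x y z)"
    by (rule sum.cong, rule refl, rule sum.swap)
  also have "\<dots> = (\<Sum>z\<in>C. \<Sum>x\<in>A. \<Sum>y\<in>B. f x y z)" by (rule sum.swap)
  finally show ?thesis .
qed

lemma kmap_qf:
  assumes "finite I" "v \<in> carrier_vec m"
  shows "qf m (kmap n I K m X) v = (\<Sum>r\<in>I. qf n X (vec n (\<lambda>j. \<Sum>t<m. cnj (K r t j) * v $ t)))"
proof -
  have "qf m (kmap n I K m X) v = (\<Sum>s<m. \<Sum>t<m. \<Sum>r\<in>I. \<Sum>i<n. \<Sum>j<n. cnj (v $ s) * K r s i * X $$ (i,j) * cnj (K r t j) * v $ t)"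
    unfolding qf_def by (simp add: sum_distrib_left sum_distrib_right mult.assoc)
  also have "\<dots> = (\<Sum>r\<in>I. \<Sum>i<n. \<Sum>j<n. \<Sum>s<m. \<Sum>t<m. cnj (v $ s) * K r s i * X $$ (i,j) * cnj (K r t j) * v $ t)"
  proof -
    let ?F = "\<lambda>s t r i j. cnj (v $ s) * K r s i * X $$ (i,j) * cnj (K r t j) * v $ t"
    have "(\<Sum>s<m. \<Sum>t<m. \<Sum>r\<in>I. \<Sum>i<n. \<Sum>j<n. ?F s t r i j) = (\<Sum>r\<in>I. \<Sum>s<m. \<Sum>t<m. \<Sum>i<n. \<Sum>j<n. ?F s t r i j)"
      by (rule swap3)
    also have "\<dots> = (\<Sum>r\<in>I. \<Sum>i<n. \<Sum>s<m. \<Sum>t<m. \<Sum>j<n. ?F s t r i j)"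
      by (rule sum.cong, rule refl, rule swap3)
    also have "\<dots> = (\<Sum>r\<in>I. \<Sum>i<n. \<Sum>j<n. \<Sum>s<m. \<Sum>t<m. ?F s t r i j)"
      by (rule sum.cong, rule refl, rule sum.cong, rule refl, rule swap3)
    finally show ?thesis .
  qed
  also have "\<dots> = (\<Sum>r\<in>I. qf n X (vec n (\<lambda>j. \<Sum>t<m. cnj (K r t j) * v $ t)))"
    unfolding qf_def by (simp add: sum_distrib_left sum_distrib_right mult.assoc mult.left_commute mult.commute)
  finally show ?thesis .
qed


lemma sum_split_mult:
  fixes f :: "nat \<Rightarrow> 'a::comm_monoid_add"
  shows "(\<Sum>i<a*b. f i) = (\<Sum>x<a. \<Sum>y<b. f (x*b+y))"
proof (induction a)
  case 0 then show ?case by simp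
next
  case (Suc a)
  have "{..<Suc a * b} = {..<a*b} \<union> {a*b..<a*b+b}" by auto
  then have "(\<Sum>i<Suc a*b. f i) = (\<Sum>i<a*b. f i) + (\<Sum>i\<in>{a*b..<a*b+b}. f i)"
    by (simp add: sum.union_disjoint ivl_disj_int)
  also have "(\<Sum>i\<in>{a*b..<a*b+b}. f i) = (\<Sum>y<b. f (a*b+y))"
    using sum.shift_bounds_nat_ivl[of f 0 "a*b" b] by (simp add: atLeast0LessThan add.commute)
  finally show ?case using Suc by simp
qed

lemma kmap_dims[simp]: "dim_row (kmap n I K m X) = m" "dim_col (kmap n I K m X) = m"
  unfolding kmap_def by simp_all

lemma kmap_psd:
  assumes "finite I" "psd n X"
  shows "psd m (kmap n I K m X)"
  unfolding psd_qf
proof (intro conjI ballI)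
  fix v :: "complex vec" assume v: "v \<in> carrier_vec m"
  let ?x = "\<lambda>r. vec n (\<lambda>j. \<Sum>t<m. cnj (K r t j) * v $ t)"
  have q: "qf m (kmap n I K m X) v = (\<Sum>r\<in>I. qf n X (?x r))" by (rule kmap_qf[OF assms(1) v])
  have h: "Im (qf n X (?x r)) = 0 \<and> Re (qf n X (?x r)) \<ge> 0" for r
    using assms(2) unfolding psd_qf by auto
  show "Im (qf m (kmap n I K m X) v) = 0" unfolding q Im_sum using h by simp
  show "Re (qf m (kmap n I K m X) v) \<ge> 0" unfolding q Re_sum using h by (simp add: sum_nonneg)
qed simp

lemma sum_block:
  fixes g :: "nat \<Rightarrow> 'a::comm_ring_1"
  assumes "c < k"
  shows "(\<Sum>i<k*n. (if c = i div n then f (i mod n) else 0) * g i) = (\<Sum>y<n. f y * g (c*n+y))"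
proof (cases "n = 0")
  case True then show ?thesis by simp
next
  case False
  have "(\<Sum>i<k*n. (if c = i div n then f (i mod n) else 0) * g i)
     = (\<Sum>x<k. \<Sum>y<n. (if c = x then f y else 0) * g (x*n+y))"
    unfolding sum_split_mult using False by (intro sum.cong refl) simp
  also have "\<dots> = (\<Sum>x<k. if c = x then (\<Sum>y<n. f y * g (x*n+y)) else 0)"
    by (intro sum.cong refl) auto
  also have "\<dots> = (\<Sum>y<n. f y * g (c*n+y))" using assms by (simp add: sum.delta)
  finally show ?thesis .
qed

lemma kmap_ampl:
  assumes Y: "Y \<in> carrier_mat (k*n) (k*n)"
  shows "ampl k n m (kmap n I K m) Y = kmap (k*n) I (\<lambda>r s i. if s div m = i div n then K r (s mod m) (i mod n) else 0) (k*m) Y"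
proof (rule eq_matI)
  fix s t assume st: "s < dim_row (kmap (k*n) I (\<lambda>r s i. if s div m = i div n then K r (s mod m) (i mod n) else 0) (k*m) Y)"
    "t < dim_col (kmap (k*n) I (\<lambda>r s i. if s div m = i div n then K r (s mod m) (i mod n) else 0) (k*m) Y)"
  then have s: "s < k*m" and t: "t < k*m" by auto
  then have m: "m > 0" by (cases m) auto
  have sd: "s div m < k" "t div m < k" using s t by (simp_all add: less_mult_imp_div_less)
  have "ampl k n m (kmap n I K m) Y $$ (s,t) = (\<Sum>r\<in>I. \<Sum>i<n. \<Sum>j<n. K r (s mod m) i * Y $$ ((s div m)*n+i, (t div m)*n+j) * cnj (K r (t mod m) j))"
    unfolding ampl_def using s t m by (simp add: blk_def)
  also have "\<dots> = (\<Sum>r\<in>I. \<Sum>i<k*n. \<Sum>j<k*n. (if s div m = i div n then K r (s mod m) (i mod n) else 0) * Y $$ (i,j) * cnj (if t div m = j div n then K r (t mod m) (j mod n) else 0))"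
  proof (rule sum.cong[OF refl])
    fix r
    have "(\<Sum>i<k*n. \<Sum>j<k*n. (if s div m = i div n then K r (s mod m) (i mod n) else 0) * Y $$ (i,j) * cnj (if t div m = j div n then K r (t mod m) (j mod n) else 0))
      = (\<Sum>i<k*n. (if s div m = i div n then K r (s mod m) (i mod n) else 0) * (\<Sum>j<k*n. (if t div m = j div n then cnj (K r (t mod m) (j mod n)) else 0) * Y $$ (i,j)))"
      unfolding sum_distrib_left by (intro sum.cong refl) auto
    also have "\<dots> = (\<Sum>i<n. K r (s mod m) i * (\<Sum>j<k*n. (if t div m = j div n then cnj (K r (t mod m) (j mod n)) else 0) * Y $$ ((s div m)*n+i,j)))"
      by (rule sum_block[OF sd(1)])
    also have "\<dots> = (\<Sum>i<n. K r (s mod m) i * (\<Sum>j<n. cnj (K r (t mod m) j) * Y $$ ((s div m)*n+i,(t div m)*n+j)))"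
    proof (rule sum.cong[OF refl])
      fix i
      show "K r (s mod m) i * (\<Sum>j<k*n. (if t div m = j div n then cnj (K r (t mod m) (j mod n)) else 0) * Y $$ ((s div m)*n+i,j)) =
        K r (s mod m) i * (\<Sum>j<n. cnj (K r (t mod m) j) * Y $$ ((s div m)*n+i,(t div m)*n+j))"
        using sum_block[OF sd(2), where f="\<lambda>j. cnj (K r (t mod m) j)" and g="\<lambda>j. Y $$ ((s div m)*n+i, j)" and n=n]
        by simp
    qed
    also have "\<dots> = (\<Sum>i<n. \<Sum>j<n. K r (s mod m) i * Y $$ ((s div m)*n+i, (t div m)*n+j) * cnj (K r (t mod m) j))"
      by (simp add: sum_distrib_left mult.commute mult.left_commute)
    finally show "(\<Sum>i<n. \<Sum>j<n. K r (s mod m) i * Y $$ ((s div m)*n+i, (t div m)*n+j) * cnj (K r (t mod m) j)) = (\<Sum>i<k*n. \<Sum>j<k*n. (if s div m = i div n then K r (s mod m) (i mod n) else 0) * Y $$ (i,j) * cnj (if t div m = j div n then K r (t mod m) (j mod n) else 0))"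
      by simp
  qed
  also have "\<dots> = kmap (k*n) I (\<lambda>r s i. if s div m = i div n then K r (s mod m) (i mod n) else 0) (k*m) Y $$ (s,t)"
    using s t by simp
  finally show "ampl k n m (kmap n I K m) Y $$ (s,t) = kmap (k*n) I (\<lambda>r s i. if s div m = i div n then K r (s mod m) (i mod n) else 0) (k*m) Y $$ (s,t)" .
qed (auto simp: ampl_def)

lemma kmap_cptp:
  assumes I: "finite I"
    and TP: "\<And>i j. i < n \<Longrightarrow> j < n \<Longrightarrow> (\<Sum>r\<in>I. \<Sum>s<m. K r s i * cnj (K r s j)) = (if i = j then 1 else 0)"
  shows "cptp n m (kmap n I K m)"
  unfolding cptp_def
proof (intro conjI ballI allI impI)
  fix X Y :: "complex mat" assume X: "X \<in> carrier_mat n n" and Y: "Y \<in> carrier_mat n n"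
  show "kmap n I K m (X + Y) = kmap n I K m X + kmap n I K m Y"
  proof (rule eq_matI)
    fix s t assume "s < dim_row (kmap n I K m X + kmap n I K m Y)" "t < dim_col (kmap n I K m X + kmap n I K m Y)"
    then have st: "s < m" "t < m" by auto
    have "(\<Sum>r\<in>I. \<Sum>i<n. \<Sum>j<n. K r s i * (X + Y) $$ (i,j) * cnj (K r t j)) =
      (\<Sum>r\<in>I. \<Sum>i<n. \<Sum>j<n. K r s i * X $$ (i,j) * cnj (K r t j) + K r s i * Y $$ (i,j) * cnj (K r t j))"
      using X Y by (intro sum.cong refl) (simp add: ring_distribs)
    then show "kmap n I K m (X + Y) $$ (s,t) = (kmap n I K m X + kmap n I K m Y) $$ (s,t)"
      using st by (simp add: sum.distrib)
  qed auto
next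
  fix c and X :: "complex mat" assume X: "X \<in> carrier_mat n n"
  show "kmap n I K m (c \<cdot>\<^sub>m X) = c \<cdot>\<^sub>m kmap n I K m X"
  proof (rule eq_matI)
    fix s t assume "s < dim_row (c \<cdot>\<^sub>m kmap n I K m X)" "t < dim_col (c \<cdot>\<^sub>m kmap n I K m X)"
    then have st: "s < m" "t < m" by auto
    have "(\<Sum>r\<in>I. \<Sum>i<n. \<Sum>j<n. K r s i * (c \<cdot>\<^sub>m X) $$ (i,j) * cnj (K r t j)) =
      (\<Sum>r\<in>I. \<Sum>i<n. \<Sum>j<n. c * (K r s i * X $$ (i,j) * cnj (K r t j)))"
      using X by (intro sum.cong refl) (simp add: mult.commute mult.left_commute)
    then show "kmap n I K m (c \<cdot>\<^sub>m X) $$ (s,t) = (c \<cdot>\<^sub>m kmap n I K m X) $$ (s,t)"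
      using st by (simp add: sum_distrib_left)
  qed auto
next
  fix X :: "complex mat" assume X: "X \<in> carrier_mat n n"
  have "mtrace (kmap n I K m X) = (\<Sum>s<m. \<Sum>r\<in>I. \<Sum>i<n. \<Sum>j<n. K r s i * X $$ (i,j) * cnj (K r s j))"
    unfolding mtrace_def by simp
  also have "\<dots> = (\<Sum>i<n. \<Sum>j<n. X $$ (i,j) * (\<Sum>r\<in>I. \<Sum>s<m. K r s i * cnj (K r s j)))"
  proof -
    let ?F = "\<lambda>s r i j. K r s i * X $$ (i,j) * cnj (K r s j)"
    have "(\<Sum>s<m. \<Sum>r\<in>I. \<Sum>i<n. \<Sum>j<n. ?F s r i j) = (\<Sum>i<n. \<Sum>s<m. \<Sum>r\<in>I. \<Sum>j<n. ?F s r i j)"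
      by (rule swap3)
    also have "\<dots> = (\<Sum>i<n. \<Sum>j<n. \<Sum>s<m. \<Sum>r\<in>I. ?F s r i j)"
      by (rule sum.cong, rule refl, rule swap3)
    also have "\<dots> = (\<Sum>i<n. \<Sum>j<n. \<Sum>r\<in>I. \<Sum>s<m. ?F s r i j)"
      by (rule sum.cong, rule refl, rule sum.cong, rule refl, rule sum.swap)
    also have "\<dots> = (\<Sum>i<n. \<Sum>j<n. X $$ (i,j) * (\<Sum>r\<in>I. \<Sum>s<m. K r s i * cnj (K r s j)))"
      by (simp add: sum_distrib_left mult.commute mult.left_commute)
    finally show ?thesis .
  qed
  also have "\<dots> = (\<Sum>i<n. \<Sum>j<n. if i = j then X $$ (i,j) else 0)"
    by (intro sum.cong refl) (simp add: TP)
  also have "\<dots> = (\<Sum>i<n. X $$ (i,i))" by simp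
  also have "\<dots> = mtrace X" unfolding mtrace_def using X by simp
  finally show "mtrace (kmap n I K m X) = mtrace X" .
next
  fix k and Y :: "complex mat" assume "psd (k*n) Y"
  then show "psd (k*m) (ampl k n m (kmap n I K m) Y)"
    using kmap_ampl[of Y k n m I K] kmap_psd[OF I] unfolding psd_def by auto
qed simp



lemma kron_index:
  assumes "A \<in> carrier_mat dA dA" "B \<in> carrier_mat dB dB" "i < dA*dB" "j < dA*dB"
  shows "kron A B $$ (i,j) = A $$ (i div dB, j div dB) * B $$ (i mod dB, j mod dB)"
  using assms unfolding kron_def by simp

lemma kron_carrier: "A \<in> carrier_mat dA dA \<Longrightarrow> B \<in> carrier_mat dB dB \<Longrightarrow> kron A B \<in> carrier_mat (dA*dB) (dA*dB)"
  unfolding kron_def by simp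

lemma kmap_tensor:
  assumes "s < dA*dB" "t < dA*dB"
  shows "kmap dB I (\<lambda>r s i. f r (s div dB) * (if s mod dB = i then 1 else 0)) (dA*dB) X $$ (s,t)
    = (\<Sum>r\<in>I. f r (s div dB) * cnj (f r (t div dB))) * X $$ (s mod dB, t mod dB)"
proof -
  have dB: "dB > 0" using assms by (cases dB) auto
  have m: "s mod dB < dB" "t mod dB < dB" using dB by simp_all
  have "kmap dB I (\<lambda>r s i. f r (s div dB) * (if s mod dB = i then 1 else 0)) (dA*dB) X $$ (s,t)
     = (\<Sum>r\<in>I. \<Sum>i<dB. \<Sum>j<dB. (if i = s mod dB then (if j = t mod dB then f r (s div dB) * X $$ (i,j) * cnj (f r (t div dB)) else 0) else 0))"
    using assms by (intro trans[OF kmap_index] sum.cong refl) auto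
  also have "\<dots> = (\<Sum>r\<in>I. f r (s div dB) * X $$ (s mod dB, t mod dB) * cnj (f r (t div dB)))"
  proof (rule sum.cong[OF refl])
    fix r
    have "(\<Sum>i<dB. \<Sum>j<dB. (if i = s mod dB then (if j = t mod dB then f r (s div dB) * X $$ (i,j) * cnj (f r (t div dB)) else 0) else 0))
      = (\<Sum>i<dB. (if i = s mod dB then f r (s div dB) * X $$ (i,t mod dB) * cnj (f r (t div dB)) else 0))"
      using m by (intro sum.cong refl) (simp add: sum.delta)
    also have "\<dots> = f r (s div dB) * X $$ (s mod dB, t mod dB) * cnj (f r (t div dB))"
      using m by (simp add: sum.delta)
    finally show "(\<Sum>i<dB. \<Sum>j<dB. (if i = s mod dB then (if j = t mod dB then f r (s div dB) * X $$ (i,j) * cnj (f r (t div dB)) else 0) else 0))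
      = f r (s div dB) * X $$ (s mod dB, t mod dB) * cnj (f r (t div dB))" .
  qed
  also have "\<dots> = (\<Sum>r\<in>I. f r (s div dB) * cnj (f r (t div dB))) * X $$ (s mod dB, t mod dB)"
    unfolding sum_distrib_right by (intro sum.cong refl) (simp only: ac_simps)
  finally show ?thesis .
qed

lemma kron_as_kmap:
  assumes Z: "Z \<in> carrier_mat dA dA" and X: "X \<in> carrier_mat dB dB"
    and f: "\<And>a b. a < dA \<Longrightarrow> b < dA \<Longrightarrow> (\<Sum>r\<in>I. f r a * cnj (f r b)) = Z $$ (a,b)"
  shows "kron Z X = kmap dB I (\<lambda>r s i. f r (s div dB) * (if s mod dB = i then 1 else 0)) (dA*dB) X"
proof (rule eq_matI)
  fix s t assume "s < dim_row (kmap dB I (\<lambda>r s i. f r (s div dB) * (if s mod dB = i then 1 else 0)) (dA*dB) X)"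
    "t < dim_col (kmap dB I (\<lambda>r s i. f r (s div dB) * (if s mod dB = i then 1 else 0)) (dA*dB) X)"
  then have st: "s < dA*dB" "t < dA*dB" by auto
  have "s div dB < dA" "t div dB < dA" using st by (simp_all add: less_mult_imp_div_less mult.commute)
  then have "kron Z X $$ (s,t) = (\<Sum>r\<in>I. f r (s div dB) * cnj (f r (t div dB))) * X $$ (s mod dB, t mod dB)"
    using kron_index[OF Z X st] f by simp
  then show "kron Z X $$ (s,t) = kmap dB I (\<lambda>r s i. f r (s div dB) * (if s mod dB = i then 1 else 0)) (dA*dB) X $$ (s,t)"
    using kmap_tensor[OF st, of I f X] by simp
qed (use Z X in \<open>auto simp: kron_def\<close>)

lemma psd_kron:
  assumes "finite I" and Z: "Z \<in> carrier_mat dA dA" and X: "psd dB X"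
    and f: "\<And>a b. a < dA \<Longrightarrow> b < dA \<Longrightarrow> (\<Sum>r\<in>I. f r a * cnj (f r b)) = Z $$ (a,b)"
  shows "psd (dA*dB) (kron Z X)"
proof -
  have Xc: "X \<in> carrier_mat dB dB" using X unfolding psd_def by simp
  show ?thesis using kron_as_kmap[OF Z Xc f] kmap_psd[OF assms(1) X] by simp
qed

lemma ketbra_index: "a < dim_vec \<psi> \<Longrightarrow> b < dim_vec \<psi> \<Longrightarrow> ketbra \<psi> $$ (a,b) = \<psi> $ a * cnj (\<psi> $ b)"
  unfolding ketbra_def by simp

lemma ketbra_carrier: "\<psi> \<in> carrier_vec dA \<Longrightarrow> ketbra \<psi> \<in> carrier_mat dA dA"
  unfolding ketbra_def by auto

definition Qm :: "complex vec \<Rightarrow> complex mat" where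
  "Qm \<psi> = mat (dim_vec \<psi>) (dim_vec \<psi>) (\<lambda>(a,b). (if a = b then 1 else 0) - \<psi> $ a * cnj (\<psi> $ b))"

lemma Qm_carrier: "\<psi> \<in> carrier_vec dA \<Longrightarrow> Qm \<psi> \<in> carrier_mat dA dA"
  unfolding Qm_def by auto

lemma norm1: "(\<Sum>i<dA. (cmod (\<psi> $ i))\<^sup>2) = 1 \<Longrightarrow> (\<Sum>i<dA. \<psi> $ i * cnj (\<psi> $ i)) = 1"
proof -
  assume h: "(\<Sum>i<dA. (cmod (\<psi> $ i))\<^sup>2) = 1"
  have "(\<Sum>i<dA. \<psi> $ i * cnj (\<psi> $ i)) = complex_of_real (\<Sum>i<dA. (cmod (\<psi> $ i))\<^sup>2)"
    unfolding of_real_sum by (intro sum.cong refl) (simp only: complex_norm_square)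
  then show ?thesis using h by simp
qed

lemma Q_alg:
  assumes n1: "(\<Sum>i<dA. \<psi> $ i * cnj (\<psi> $ i)) = 1" and ab: "a < dA" "b < dA"
  shows "(\<Sum>r<dA. ((if a = r then 1 else 0) - \<psi> $ a * cnj (\<psi> $ r)) * cnj ((if b = r then 1 else 0) - \<psi> $ b * cnj (\<psi> $ r)))
    = (if a = b then 1 else 0) - \<psi> $ a * cnj (\<psi> $ b)"
proof -
  have e: "((if a = r then 1 else 0) - \<psi> $ a * cnj (\<psi> $ r)) * cnj ((if b = r then 1 else 0) - \<psi> $ b * cnj (\<psi> $ r))
      = (if a = r then 1 else 0) * (if b = r then 1 else 0) - (if a = r then cnj (\<psi> $ b) * \<psi> $ r else 0)
      - (if b = r then \<psi> $ a * cnj (\<psi> $ r) else 0) + \<psi> $ a * cnj (\<psi> $ b) * (\<psi> $ r * cnj (\<psi> $ r))" for r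
    by (cases "a = r"; cases "b = r") (simp_all add: algebra_simps)
  have "(\<Sum>r<dA. ((if a = r then 1 else 0) - \<psi> $ a * cnj (\<psi> $ r)) * cnj ((if b = r then 1 else 0) - \<psi> $ b * cnj (\<psi> $ r)))
    = (\<Sum>r<dA. (if a = r then 1 else 0) * (if b = r then 1 else 0)) - (\<Sum>r<dA. (if a = r then cnj (\<psi> $ b) * \<psi> $ r else 0))
      - (\<Sum>r<dA. (if b = r then \<psi> $ a * cnj (\<psi> $ r) else 0)) + \<psi> $ a * cnj (\<psi> $ b) * (\<Sum>r<dA. \<psi> $ r * cnj (\<psi> $ r))"
    unfolding e sum_subtractf sum.distrib sum_distrib_left by simp
  also have "(\<Sum>r<dA. (if a = r then 1 else 0) * (if b = r then (1::complex) else 0)) = (if a = b then 1 else 0)"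
    using ab by (cases "a = b") (auto intro: sum.neutral simp: if_distrib sum.delta cong: if_cong)
  also have "(\<Sum>r<dA. (if a = r then cnj (\<psi> $ b) * \<psi> $ r else 0)) = cnj (\<psi> $ b) * \<psi> $ a"
    using ab by (simp add: sum.delta)
  also have "(\<Sum>r<dA. (if b = r then \<psi> $ a * cnj (\<psi> $ r) else 0)) = \<psi> $ a * cnj (\<psi> $ b)"
    using ab by (simp add: sum.delta)
  also have "(if a = b then 1 else 0) - cnj (\<psi> $ b) * \<psi> $ a - \<psi> $ a * cnj (\<psi> $ b) + \<psi> $ a * cnj (\<psi> $ b) * (\<Sum>r<dA. \<psi> $ r * cnj (\<psi> $ r))
     = (if a = b then 1 else 0) - \<psi> $ a * cnj (\<psi> $ b)"
    using n1 by simp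
  finally show ?thesis .
qed



lemma lt_mult_add: "r < (dA::nat) \<Longrightarrow> s < dB \<Longrightarrow> r*dB + s < dA*dB"
proof -
  assume "r < dA" "s < dB"
  then have "r*dB + s < r*dB + dB" by simp
  also have "\<dots> = (r+1)*dB" by simp
  also have "\<dots> \<le> dA*dB" using \<open>r < dA\<close> by (intro mult_right_mono) auto
  finally show ?thesis .
qed

lemma psd_S:
  assumes "\<psi> \<in> carrier_vec dA" "psd dB \<rho>"
  shows "psd (dA*dB) (kron (ketbra \<psi>) \<rho>)"
  by (rule psd_kron[where I="{0::nat}" and f="\<lambda>r a. \<psi> $ a"])
     (use assms in \<open>auto simp: ketbra_carrier ketbra_index\<close>)

lemma psd_1:
  assumes "psd dB \<sigma>"
  shows "psd (dA*dB) (kron (1\<^sub>m dA) \<sigma>)"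
proof (rule psd_kron[where I="{..<dA}" and f="\<lambda>r a. if a = r then 1 else 0"])
  fix a b assume ab: "a < dA" "b < dA"
  have e: "(if a = r then 1 else 0) * cnj (if b = r then 1 else (0::complex)) = (if r = a then (if a = b then 1 else 0) else 0)" for r
    by auto
  show "(\<Sum>r\<in>{..<dA}. (if a = r then 1 else 0) * cnj (if b = r then 1 else 0)) = 1\<^sub>m dA $$ (a, b)"
    unfolding e using ab by (simp add: sum.delta)
qed (use assms in auto)

lemma psd_Q:
  assumes "\<psi> \<in> carrier_vec dA" "psd dB \<rho>" "(\<Sum>i<dA. \<psi> $ i * cnj (\<psi> $ i)) = 1"
  shows "psd (dA*dB) (kron (Qm \<psi>) \<rho>)"
proof (rule psd_kron[where I="{..<dA}" and f="\<lambda>r a. (if a = r then 1 else 0) - \<psi> $ a * cnj (\<psi> $ r)"])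
  fix a b assume ab: "a < dA" "b < dA"
  have "(\<Sum>r<dA. ((if a = r then 1 else 0) - \<psi> $ a * cnj (\<psi> $ r)) * cnj ((if b = r then 1 else 0) - \<psi> $ b * cnj (\<psi> $ r)))
    = (if a = b then 1 else 0) - \<psi> $ a * cnj (\<psi> $ b)" by (rule Q_alg[OF assms(3) ab])
  then show "(\<Sum>r\<in>{..<dA}. ((if a = r then 1 else 0) - \<psi> $ a * cnj (\<psi> $ r)) * cnj ((if b = r then 1 else 0) - \<psi> $ b * cnj (\<psi> $ r)))
    = Qm \<psi> $$ (a, b)" using ab assms(1) unfolding Qm_def by simp
qed (use assms in \<open>auto simp: Qm_carrier\<close>)

lemma kron_sum:
  assumes "\<psi> \<in> carrier_vec dA" "\<rho> \<in> carrier_mat dB dB"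
  shows "kron (1\<^sub>m dA) \<rho> = kron (ketbra \<psi>) \<rho> + kron (Qm \<psi>) \<rho>"
proof (rule eq_matI)
  fix i j assume "i < dim_row (kron (ketbra \<psi>) \<rho> + kron (Qm \<psi>) \<rho>)" "j < dim_col (kron (ketbra \<psi>) \<rho> + kron (Qm \<psi>) \<rho>)"
  then have ij: "i < dA*dB" "j < dA*dB" using assms by (auto simp: kron_def Qm_def ketbra_def)
  have d: "i div dB < dA" "j div dB < dA" using ij by (simp_all add: less_mult_imp_div_less mult.commute)
  have QI: "Qm \<psi> $$ (i div dB, j div dB) = (if i div dB = j div dB then 1 else 0) - \<psi> $ (i div dB) * cnj (\<psi> $ (j div dB))"
    using d assms by (simp add: Qm_def)
  have KI: "ketbra \<psi> $$ (i div dB, j div dB) = \<psi> $ (i div dB) * cnj (\<psi> $ (j div dB))"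
    using d assms by (simp add: ketbra_index)
  have addI: "(kron (ketbra \<psi>) \<rho> + kron (Qm \<psi>) \<rho>) $$ (i,j) = kron (ketbra \<psi>) \<rho> $$ (i,j) + kron (Qm \<psi>) \<rho> $$ (i,j)"
    using kron_carrier[OF Qm_carrier[OF assms(1)] assms(2)] ij by simp
  show "kron (1\<^sub>m dA) \<rho> $$ (i,j) = (kron (ketbra \<psi>) \<rho> + kron (Qm \<psi>) \<rho>) $$ (i,j)"
    unfolding addI kron_index[OF one_carrier_mat assms(2) ij] kron_index[OF ketbra_carrier[OF assms(1)] assms(2) ij]
      kron_index[OF Qm_carrier[OF assms(1)] assms(2) ij] QI KI
    using d by (simp add: algebra_simps)
qed (use assms in \<open>auto simp: kron_def ketbra_def Qm_def\<close>)

lemma mtrace_kron_ketbra: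
  assumes "\<psi> \<in> carrier_vec dA" "\<rho> \<in> carrier_mat dB dB" "(\<Sum>i<dA. \<psi> $ i * cnj (\<psi> $ i)) = 1" "mtrace \<rho> = 1"
  shows "mtrace (kron (ketbra \<psi>) \<rho>) = 1"
proof -
  have "mtrace (kron (ketbra \<psi>) \<rho>) = (\<Sum>i<dA*dB. kron (ketbra \<psi>) \<rho> $$ (i,i))"
    using assms unfolding mtrace_def by (simp add: kron_def ketbra_def)
  also have "\<dots> = (\<Sum>a<dA. \<Sum>p<dB. \<psi> $ a * cnj (\<psi> $ a) * \<rho> $$ (p,p))"
    unfolding sum_split_mult
    using assms kron_index[OF ketbra_carrier[OF assms(1)] assms(2)] lt_mult_add
    by (intro sum.cong refl) (simp add: ketbra_index)
  also have "\<dots> = (\<Sum>a<dA. \<psi> $ a * cnj (\<psi> $ a) * (\<Sum>p<dB. \<rho> $$ (p,p)))"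
    by (simp add: sum_distrib_left)
  also have "\<dots> = (\<Sum>a<dA. \<psi> $ a * cnj (\<psi> $ a)) * mtrace \<rho>"
    using assms(2) by (simp add: mtrace_def sum_distrib_right)
  finally show ?thesis using assms by simp
qed

lemma ptrace_kron_ketbra:
  assumes "\<psi> \<in> carrier_vec dA" "\<rho> \<in> carrier_mat dB dB" "(\<Sum>i<dA. \<psi> $ i * cnj (\<psi> $ i)) = 1"
  shows "ptrace_A dA dB (kron (ketbra \<psi>) \<rho>) = \<rho>"
proof (rule eq_matI)
  fix s t assume "s < dim_row \<rho>" "t < dim_col \<rho>"
  then have st: "s < dB" "t < dB" using assms by auto
  have "(\<Sum>a<dA. kron (ketbra \<psi>) \<rho> $$ (a * dB + s, a * dB + t)) = (\<Sum>a<dA. \<psi> $ a * cnj (\<psi> $ a) * \<rho> $$ (s,t))"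
    using kron_index[OF ketbra_carrier[OF assms(1)] assms(2)] lt_mult_add st assms
    by (intro sum.cong refl) (simp add: ketbra_index)
  also have "\<dots> = \<rho> $$ (s,t)" using assms by (simp flip: sum_distrib_right)
  finally show "ptrace_A dA dB (kron (ketbra \<psi>) \<rho>) $$ (s,t) = \<rho> $$ (s,t)"
    unfolding ptrace_A_def using st by simp
qed (use assms in \<open>auto simp: ptrace_A_def\<close>)

lemma ptrace_kmap:
  "ptrace_A dA dB \<rho> = kmap (dA*dB) {..<dA} (\<lambda>r s i. if i = r*dB+s then 1 else 0) dB \<rho>"
proof (rule eq_matI)
  fix s t assume "s < dim_row (kmap (dA*dB) {..<dA} (\<lambda>r s i. if i = r*dB+s then 1 else 0) dB \<rho>)"
     "t < dim_col (kmap (dA*dB) {..<dA} (\<lambda>r s i. if i = r*dB+s then 1 else 0) dB \<rho>)"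
  then have st: "s < dB" "t < dB" by auto
  have "kmap (dA*dB) {..<dA} (\<lambda>r s i. if i = r*dB+s then 1 else 0) dB \<rho> $$ (s,t)
    = (\<Sum>r<dA. \<Sum>i<dA*dB. \<Sum>j<dA*dB. if i = r*dB+s then (if j = r*dB+t then \<rho> $$ (i,j) else 0) else 0)"
    using st by (intro trans[OF kmap_index] sum.cong refl) auto
  also have "\<dots> = (\<Sum>r<dA. \<rho> $$ (r*dB+s, r*dB+t))"
  proof (rule sum.cong[OF refl])
    fix r assume "r \<in> {..<dA}"
    then have l: "r*dB+s < dA*dB" "r*dB+t < dA*dB" using lt_mult_add st by auto
    have "(\<Sum>i<dA*dB. \<Sum>j<dA*dB. if i = r*dB+s then (if j = r*dB+t then \<rho> $$ (i,j) else 0) else 0)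
       = (\<Sum>i<dA*dB. if i = r*dB+s then \<rho> $$ (i,r*dB+t) else 0)"
      using l by (intro sum.cong refl) (simp add: sum.delta)
    also have "\<dots> = \<rho> $$ (r*dB+s, r*dB+t)" using l by (simp add: sum.delta)
    finally show "(\<Sum>i<dA*dB. \<Sum>j<dA*dB. if i = r*dB+s then (if j = r*dB+t then \<rho> $$ (i,j) else 0) else 0) = \<rho> $$ (r*dB+s, r*dB+t)" .
  qed
  finally show "ptrace_A dA dB \<rho> $$ (s,t) = kmap (dA*dB) {..<dA} (\<lambda>r s i. if i = r*dB+s then 1 else 0) dB \<rho> $$ (s,t)"
    unfolding ptrace_A_def using st by (simp add: add.commute mult.commute)
qed (auto simp: ptrace_A_def)

lemma density_ptrace:
  assumes "density (dA*dB) \<rho>"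
  shows "density dB (ptrace_A dA dB \<rho>)"
proof -
  have p: "psd (dA*dB) \<rho>" and tr: "mtrace \<rho> = 1" using assms unfolding density_def by auto
  then have rc: "\<rho> \<in> carrier_mat (dA*dB) (dA*dB)" unfolding psd_def by simp
  have "psd dB (ptrace_A dA dB \<rho>)" unfolding ptrace_kmap by (rule kmap_psd[OF _ p]) simp
  moreover have "mtrace (ptrace_A dA dB \<rho>) = 1"
  proof -
    have "mtrace (ptrace_A dA dB \<rho>) = (\<Sum>s<dB. \<Sum>a<dA. \<rho> $$ (a * dB + s, a * dB + s))"
      unfolding mtrace_def ptrace_A_def by simp
    also have "\<dots> = (\<Sum>a<dA. \<Sum>s<dB. \<rho> $$ (a * dB + s, a * dB + s))" by (rule sum.swap)
    also have "\<dots> = (\<Sum>i<dA*dB. \<rho> $$ (i,i))" unfolding sum_split_mult ..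
    also have "\<dots> = 1" using tr rc unfolding mtrace_def by simp
    finally show ?thesis .
  qed
  ultimately show ?thesis unfolding density_def by simp
qed



lemma sum_add_split:
  fixes f :: "nat \<Rightarrow> 'a::comm_monoid_add"
  shows "(\<Sum>i<n+m. f i) = (\<Sum>i<n. f i) + (\<Sum>i<m. f (n+i))"
  by (induction m) (simp_all add: ac_simps)

lemma dsum_carrier: "A \<in> carrier_mat n n \<Longrightarrow> B \<in> carrier_mat m m \<Longrightarrow> dsum A B \<in> carrier_mat (n+m) (n+m)"
  unfolding dsum_def by auto

lemma dsum_index:
  assumes "A \<in> carrier_mat n n" "B \<in> carrier_mat m m" "i < n+m" "j < n+m"
  shows "dsum A B $$ (i,j) = (if i < n \<and> j < n then A $$ (i,j) else if n \<le> i \<and> n \<le> j then B $$ (i-n,j-n) else 0)"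
  using assms unfolding dsum_def by (auto simp: index_mat_four_block)

lemma psd_dsum:
  assumes A: "psd n A" and B: "psd m B"
  shows "psd (n+m) (dsum A B)"
  unfolding psd_qf
proof (intro conjI ballI)
  have Ac: "A \<in> carrier_mat n n" and Bc: "B \<in> carrier_mat m m" using A B unfolding psd_def by auto
  show "dsum A B \<in> carrier_mat (n+m) (n+m)" by (rule dsum_carrier[OF Ac Bc])
  fix v :: "complex vec" assume v: "v \<in> carrier_vec (n+m)"
  let ?v1 = "vec n (\<lambda>i. v $ i)" and ?v2 = "vec m (\<lambda>i. v $ (n+i))"
  have q: "qf (n+m) (dsum A B) v = qf n A ?v1 + qf m B ?v2"
    unfolding qf_def sum_add_split
    using Ac Bc by (simp add: dsum_index sum.distrib)
  have "?v1 \<in> carrier_vec n" "?v2 \<in> carrier_vec m" by auto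
  then have h: "Im (qf n A ?v1) = 0" "Re (qf n A ?v1) \<ge> 0" "Im (qf m B ?v2) = 0" "Re (qf m B ?v2) \<ge> 0"
    using A B unfolding psd_qf by auto
  show "Im (qf (n+m) (dsum A B) v) = 0" using q h by simp
  show "Re (qf (n+m) (dsum A B) v) \<ge> 0" using q h by simp
qed

lemma psd_zero: "psd m (0\<^sub>m m m)"
  unfolding psd_qf qf_def by simp

lemma psd_scalar: "Im c = 0 \<Longrightarrow> Re c \<ge> 0 \<Longrightarrow> psd 1 (mat 1 1 (\<lambda>_. c))"
proof -
  assume c: "Im c = 0" "Re c \<ge> 0"
  have e: "cnj z * c * z = c * of_real ((cmod z)\<^sup>2)" for z
  proof -
    have "cnj z * c * z = c * (z * cnj z)" by (simp add: ac_simps)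
    also have "\<dots> = c * of_real ((cmod z)\<^sup>2)" by (simp only: complex_norm_square)
    finally show ?thesis .
  qed
  show ?thesis unfolding psd_qf qf_def using c by (simp add: e)
qed

lemma density_one: "density 1 (1\<^sub>m 1)"
proof -
  have "1\<^sub>m 1 = mat 1 1 (\<lambda>_. (1::complex))" by (rule eq_matI) auto
  then show ?thesis unfolding density_def mtrace_def using psd_scalar[of 1] by simp
qed

lemma ax_a:
  assumes "rel_K_entropy b D" "0 < n" "cptp n m E" "psd n S" "psd n T"
  shows "D (E S) (E T) \<le> D S T"
proof -
  have "\<forall>n m E S T. 0 < n \<longrightarrow> cptp n m E \<longrightarrow> psd n S \<longrightarrow> psd n T \<longrightarrow> D (E S) (E T) \<le> D S T"
    using assms(1) unfolding rel_K_entropy_def by (rule conjunct1)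
  then show ?thesis using assms(2-) by blast
qed

lemma ax_b:
  assumes "rel_K_entropy b D" "0 < n" "psd n S" "psd n T" "psd m T'"
  shows "D (dsum S (0\<^sub>m m m)) (dsum T T') = D S T"
proof -
  have "\<forall>n m S T T'. 0 < n \<longrightarrow> psd n S \<longrightarrow> psd n T \<longrightarrow> psd m T' \<longrightarrow>
         D (dsum S (0\<^sub>m m m)) (dsum T T') = D S T"
    using assms(1) unfolding rel_K_entropy_def by (rule conjunct1[OF conjunct2])
  then show ?thesis using assms(2-) by blast
qed

lemma ax_c:
  assumes "rel_K_entropy b D" "0 < n" "psd n S" "psd n T" "c > 0"
  shows "D S (complex_of_real c \<cdot>\<^sub>m T) = D S T + ereal (log b (1 / c))"
proof -
  have "\<forall>n S T (c::real). 0 < n \<longrightarrow> psd n S \<longrightarrow> psd n T \<longrightarrow> c > 0 \<longrightarrow>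
         D S (complex_of_real c \<cdot>\<^sub>m T) = D S T + ereal (log b (1 / c))"
    using assms(1) unfolding rel_K_entropy_def by (rule conjunct1[OF conjunct2[OF conjunct2]])
  then show ?thesis using assms(2-) by blast
qed

lemma ax_d:
  assumes "rel_K_entropy b D" "density n \<rho>"
  shows "D \<rho> \<rho> = 0"
proof -
  have "\<forall>n \<rho>. density n \<rho> \<longrightarrow> D \<rho> \<rho> = 0"
    using assms(1) unfolding rel_K_entropy_def by (rule conjunct2[OF conjunct2[OF conjunct2]])
  then show ?thesis using assms(2-) by blast
qed

definition Fadd :: "nat \<Rightarrow> complex mat \<Rightarrow> complex mat" where
  "Fadd n = kmap (n+n) {..<2::nat} (\<lambda>r s i. if i = r*n+s then 1 else 0) n"

lemma Fadd_cptp: "cptp (n+n) n (Fadd n)"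
  unfolding Fadd_def
proof (rule kmap_cptp)
  fix i j assume ij: "i < n+n" "j < n+n"
  have "(\<Sum>r\<in>{..<2::nat}. \<Sum>s<n. (if i = r*n+s then 1 else 0) * cnj (if j = r*n+s then 1 else 0))
     = (\<Sum>k<2*n. (if i = k then 1 else 0) * cnj (if j = k then (1::complex) else 0))"
    unfolding sum_split_mult by simp
  also have "\<dots> = (\<Sum>k<2*n. if i = k then (if i = j then 1 else 0) else 0)"
    by (intro sum.cong refl) auto
  also have "\<dots> = (if i = j then 1 else 0)" using ij by (simp add: sum.delta)
  finally show "(\<Sum>r\<in>{..<2::nat}. \<Sum>s<n. (if i = r*n+s then 1 else 0) * cnj (if j = r*n+s then 1 else 0)) = (if i = j then 1 else 0)" .
qed simp

lemma Fadd_dsum: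
  assumes A: "A \<in> carrier_mat n n" and B: "B \<in> carrier_mat n n"
  shows "Fadd n (dsum A B) = A + B"
proof (rule eq_matI)
  fix s t assume "s < dim_row (A + B)" "t < dim_col (A + B)"
  then have st: "s < n" "t < n" using A B by auto
  have l: "r*n+s < n+n" "r*n+t < n+n" if "r < 2" for r
    using that st by (cases r; cases "r - 1"; auto)+
  have "Fadd n (dsum A B) $$ (s,t) = (\<Sum>r<2. \<Sum>i<n+n. \<Sum>j<n+n. if i = r*n+s then (if j = r*n+t then dsum A B $$ (i,j) else 0) else 0)"
    unfolding Fadd_def using st by (intro trans[OF kmap_index] sum.cong refl) auto
  also have "\<dots> = (\<Sum>r<2. dsum A B $$ (r*n+s, r*n+t))"
  proof (rule sum.cong[OF refl])
    fix r :: nat assume "r \<in> {..<2}"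
    then have l: "r*n+s < n+n" "r*n+t < n+n" using l by auto
    have "(\<Sum>i<n+n. \<Sum>j<n+n. if i = r*n+s then (if j = r*n+t then dsum A B $$ (i,j) else 0) else 0)
       = (\<Sum>i<n+n. if i = r*n+s then dsum A B $$ (i,r*n+t) else 0)"
      using l by (intro sum.cong refl) (simp add: sum.delta)
    also have "\<dots> = dsum A B $$ (r*n+s, r*n+t)" using l by (simp add: sum.delta)
    finally show "(\<Sum>i<n+n. \<Sum>j<n+n. if i = r*n+s then (if j = r*n+t then dsum A B $$ (i,j) else 0) else 0) = dsum A B $$ (r*n+s, r*n+t)" .
  qed
  also have "\<dots> = A $$ (s,t) + B $$ (s,t)"
    using st A B by (simp add: numeral_2_eq_2 dsum_index)
  finally show "Fadd n (dsum A B) $$ (s,t) = (A + B) $$ (s,t)" using st A B by simp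
qed (use A B in \<open>auto simp: Fadd_def\<close>)

lemma D_mono:
  assumes DK: "rel_K_entropy b D" and n: "0 < n"
    and S: "psd n S" and T: "psd n T" and T2: "psd n T2"
  shows "D S (T + T2) \<le> D S T"
proof -
  have Sc: "S \<in> carrier_mat n n" and Tc: "T \<in> carrier_mat n n" and T2c: "T2 \<in> carrier_mat n n"
    using S T T2 unfolding psd_def by auto
  have dpi: "D (Fadd n (dsum S (0\<^sub>m n n))) (Fadd n (dsum T T2)) \<le> D (dsum S (0\<^sub>m n n)) (dsum T T2)"
    by (rule ax_a[OF DK _ Fadd_cptp psd_dsum[OF S psd_zero] psd_dsum[OF T T2]]) (use n in simp)
  have b: "D (dsum S (0\<^sub>m n n)) (dsum T T2) = D S T"
    by (rule ax_b[OF DK n S T T2])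
  have "Fadd n (dsum S (0\<^sub>m n n)) = S" using Fadd_dsum[OF Sc zero_carrier_mat] Sc by simp
  moreover have "Fadd n (dsum T T2) = T + T2" using Fadd_dsum[OF Tc T2c] .
  ultimately show ?thesis using dpi b by simp
qed



definition Ftr :: "nat \<Rightarrow> complex mat \<Rightarrow> complex mat" where
  "Ftr n = kmap n {..<n} (\<lambda>r s i. if i = r then 1 else 0) 1"

lemma Ftr_cptp: "cptp n 1 (Ftr n)"
  unfolding Ftr_def
proof (rule kmap_cptp)
  fix i j assume ij: "i < n" "j < n"
  have "(\<Sum>r<n. \<Sum>s<(1::nat). (if i = r then 1 else 0) * cnj (if j = r then 1 else 0)) = (\<Sum>r<n. if i = r then (if i = j then 1 else (0::complex)) else 0)"
    by (intro sum.cong refl) auto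
  then show "(\<Sum>r\<in>{..<n}. \<Sum>s<(1::nat). (if i = r then 1 else 0) * cnj (if j = r then 1 else 0)) = (if i = j then 1 else 0)"
    using ij by (simp add: sum.delta)
qed simp

lemma Ftr_eq:
  assumes X: "X \<in> carrier_mat n n"
  shows "Ftr n X = mat 1 1 (\<lambda>_. mtrace X)"
proof (rule eq_matI)
  fix s t assume "s < dim_row (mat 1 1 (\<lambda>_. mtrace X))" "t < dim_col (mat 1 1 (\<lambda>_. mtrace X))"
  then have st: "s = 0" "t = 0" by auto
  have "Ftr n X $$ (0,0) = (\<Sum>r<n. \<Sum>i<n. \<Sum>j<n. if i = r then (if j = r then X $$ (i,j) else 0) else 0)"
    unfolding Ftr_def by (intro trans[OF kmap_index] sum.cong refl) auto
  also have "\<dots> = (\<Sum>r<n. X $$ (r,r))"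
  proof (rule sum.cong[OF refl])
    fix r assume r: "r \<in> {..<n}"
    have "(\<Sum>i<n. \<Sum>j<n. if i = r then (if j = r then X $$ (i,j) else 0) else 0) = (\<Sum>i<n. if i = r then X $$ (i,r) else 0)"
      using r by (intro sum.cong refl) (simp add: sum.delta')
    also have "\<dots> = X $$ (r,r)" using r by (simp add: sum.delta')
    finally show "(\<Sum>i<n. \<Sum>j<n. if i = r then (if j = r then X $$ (i,j) else 0) else 0) = X $$ (r,r)" .
  qed
  finally show "Ftr n X $$ (s,t) = mat 1 1 (\<lambda>_. mtrace X) $$ (s,t)"
    using st X unfolding mtrace_def by simp
qed (auto simp: Ftr_def)

lemma mtrace_kron_one:
  assumes "\<sigma> \<in> carrier_mat dB dB" "mtrace \<sigma> = 1"
  shows "mtrace (kron (1\<^sub>m dA) \<sigma>) = of_nat dA"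
proof -
  have "mtrace (kron (1\<^sub>m dA) \<sigma>) = (\<Sum>i<dA*dB. kron (1\<^sub>m dA) \<sigma> $$ (i,i))"
    using assms unfolding mtrace_def by (simp add: kron_def)
  also have "\<dots> = (\<Sum>a<dA. \<Sum>p<dB. \<sigma> $$ (p,p))"
    unfolding sum_split_mult
    using assms kron_index[OF one_carrier_mat assms(1)] lt_mult_add
    by (intro sum.cong refl) simp
  also have "\<dots> = of_nat dA" using assms unfolding mtrace_def by simp
  finally show ?thesis .
qed

lemma one11: "mat 1 1 (\<lambda>_. 1) = (1\<^sub>m 1 :: complex mat)"
  by (rule eq_matI) auto

lemma part2_bound:
  assumes DK: "rel_K_entropy b D" and pos: "0 < dA" "0 < dB"
    and rho: "density (dA*dB) \<rho>" and sig: "density dB \<sigma>"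
  shows "ereal (log b (1 / real dA)) \<le> D \<rho> (kron (1\<^sub>m dA) \<sigma>)"
proof -
  have rp: "psd (dA*dB) \<rho>" and rt: "mtrace \<rho> = 1" using rho unfolding density_def by auto
  have rc: "\<rho> \<in> carrier_mat (dA*dB) (dA*dB)" using rp unfolding psd_def by simp
  have sp: "psd dB \<sigma>" and st: "mtrace \<sigma> = 1" using sig unfolding density_def by auto
  have sc: "\<sigma> \<in> carrier_mat dB dB" using sp unfolding psd_def by simp
  have Tp: "psd (dA*dB) (kron (1\<^sub>m dA) \<sigma>)" by (rule psd_1[OF sp])
  have Tc: "kron (1\<^sub>m dA) \<sigma> \<in> carrier_mat (dA*dB) (dA*dB)" by (rule kron_carrier[OF one_carrier_mat sc])
  have n: "0 < dA*dB" using pos by simp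
  have dpi: "D (Ftr (dA*dB) \<rho>) (Ftr (dA*dB) (kron (1\<^sub>m dA) \<sigma>)) \<le> D \<rho> (kron (1\<^sub>m dA) \<sigma>)"
    by (rule ax_a[OF DK n Ftr_cptp rp Tp])
  have e1: "Ftr (dA*dB) \<rho> = 1\<^sub>m 1" using Ftr_eq[OF rc] rt one11 by simp
  have e2: "Ftr (dA*dB) (kron (1\<^sub>m dA) \<sigma>) = complex_of_real (real dA) \<cdot>\<^sub>m 1\<^sub>m 1"
    unfolding Ftr_eq[OF Tc] mtrace_kron_one[OF sc st] by (rule eq_matI) auto
  have p1: "psd 1 (1\<^sub>m 1)" using density_one unfolding density_def by simp
  have "D (1\<^sub>m 1) (complex_of_real (real dA) \<cdot>\<^sub>m 1\<^sub>m 1) = D (1\<^sub>m 1) (1\<^sub>m 1) + ereal (log b (1 / real dA))"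
    by (rule ax_c[OF DK _ p1 p1]) (use pos in auto)
  also have "D (1\<^sub>m 1) (1\<^sub>m 1) = 0" by (rule ax_d[OF DK density_one])
  finally show ?thesis using dpi e1 e2 by simp
qed

lemma part2:
  assumes DK: "rel_K_entropy b D" and HK: "H = condK1 D \<or> H = condK2 D"
    and pos: "0 < dA" "0 < dB" and rho: "density (dA*dB) \<rho>"
  shows "H dA dB \<rho> \<le> ereal (log b (real dA))"
proof -
  have key: "- D \<rho> (kron (1\<^sub>m dA) \<sigma>) \<le> ereal (log b (real dA))" if sig: "density dB \<sigma>" for \<sigma>
  proof -
    have "ereal (- log b (real dA)) \<le> D \<rho> (kron (1\<^sub>m dA) \<sigma>)"
      using part2_bound[OF DK pos rho sig] by (simp add: log_recip)
    then show ?thesis by (simp add: ereal_uminus_le_reorder)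
  qed
  from HK show ?thesis
  proof
    assume "H = condK1 D"
    then show ?thesis unfolding condK1_def using key[OF density_ptrace[OF rho]] by simp
  next
    assume "H = condK2 D"
    then show ?thesis unfolding condK2_def using key by (auto intro: SUP_least)
  qed
qed



definition Mm :: "(nat \<Rightarrow> complex) \<Rightarrow> nat \<Rightarrow> nat \<Rightarrow> nat \<Rightarrow> complex" where
  "Mm w x r a = (if x = 0 then w r * cnj (w a) else (if r = a then 1 else 0) - w r * cnj (w a))"

definition Kmeas :: "nat \<Rightarrow> (nat \<Rightarrow> complex) \<Rightarrow> nat \<times> nat \<times> nat \<Rightarrow> nat \<Rightarrow> nat \<Rightarrow> complex" where
  "Kmeas dB w y s i = (case y of (x, r, p) \<Rightarrow> if s = x then Mm w x r (i div dB) * (if p = i mod dB then 1 else 0) else 0)"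

definition Fmeas :: "nat \<Rightarrow> nat \<Rightarrow> (nat \<Rightarrow> complex) \<Rightarrow> complex mat \<Rightarrow> complex mat" where
  "Fmeas dA dB w = kmap (dA*dB) ({..<2} \<times> {..<dA} \<times> {..<dB}) (Kmeas dB w) 2"

lemma sum3: "(\<Sum>y\<in>A\<times>B\<times>C. f y) = (\<Sum>x\<in>A. \<Sum>r\<in>B. \<Sum>p\<in>C. f (x,r,p))"
  by (simp add: sum.cartesian_product)

lemma sum_if_const: "(\<Sum>b\<in>B. if P then f b else 0) = (if P then sum f B else 0)"
  by (cases P) auto

lemma Msum:
  assumes n1: "(\<Sum>i<dA. w i * cnj (w i)) = 1" and ab: "a < dA" "b < dA"
  shows "(\<Sum>x<2. \<Sum>r<dA. Mm w x r a * cnj (Mm w x r b)) = (if a = b then 1 else 0)"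
proof -
  have s0: "(\<Sum>r<dA. Mm w 0 r a * cnj (Mm w 0 r b)) = cnj (w a) * w b"
  proof -
    have "(\<Sum>r<dA. Mm w 0 r a * cnj (Mm w 0 r b)) = (\<Sum>r<dA. cnj (w a) * w b * (w r * cnj (w r)))"
      unfolding Mm_def by (intro sum.cong refl) (simp add: ac_simps)
    also have "\<dots> = cnj (w a) * w b" using n1 by (simp flip: sum_distrib_left)
    finally show ?thesis .
  qed
  have e: "Mm w 1 r a * cnj (Mm w 1 r b) = (if r = a then 1 else 0) * (if r = b then 1 else 0)
      - (if r = a then cnj (w r) * w b else 0) - (if r = b then w r * cnj (w a) else 0)
      + cnj (w a) * w b * (w r * cnj (w r))" for r
    unfolding Mm_def by (cases "r = a"; cases "r = b") (simp_all add: algebra_simps)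
  have s1: "(\<Sum>r<dA. Mm w 1 r a * cnj (Mm w 1 r b)) = (if a = b then 1 else 0) - cnj (w a) * w b"
  proof -
    have "(\<Sum>r<dA. Mm w 1 r a * cnj (Mm w 1 r b)) = (\<Sum>r<dA. (if r = a then 1 else 0) * (if r = b then (1::complex) else 0))
      - (\<Sum>r<dA. if r = a then cnj (w r) * w b else 0) - (\<Sum>r<dA. if r = b then w r * cnj (w a) else 0)
      + cnj (w a) * w b * (\<Sum>r<dA. w r * cnj (w r))"
      unfolding e sum_subtractf sum.distrib sum_distrib_left by simp
    also have "(\<Sum>r<dA. (if r = a then 1 else 0) * (if r = b then (1::complex) else 0)) = (if a = b then 1 else 0)"
    proof -
      have "(\<Sum>r<dA. (if r = a then 1 else 0) * (if r = b then (1::complex) else 0)) = (\<Sum>r<dA. if r = a then (if a = b then 1 else 0) else 0)"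
        by (intro sum.cong refl) auto
      then show ?thesis using ab by (simp add: sum.delta')
    qed
    finally show ?thesis using ab n1 by (simp add: sum.delta')
  qed
  show ?thesis using s0 s1 by (simp add: numeral_2_eq_2)
qed

lemma Kmeas_idx: "q < dB \<Longrightarrow> Kmeas dB w (x,r,p) s (a*dB+q) = (if s = x then Mm w x r a * (if p = q then 1 else 0) else 0)"
  unfolding Kmeas_def by simp

lemma Fmeas_cptp:
  assumes n1: "(\<Sum>i<dA. w i * cnj (w i)) = 1"
  shows "cptp (dA*dB) 2 (Fmeas dA dB w)"
  unfolding Fmeas_def
proof (rule kmap_cptp)
  fix i j assume ij: "i < dA*dB" "j < dA*dB"
  then have dB: "dB > 0" by (cases dB) auto
  have d: "i div dB < dA" "j div dB < dA" using ij by (simp_all add: less_mult_imp_div_less mult.commute)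
  have m: "i mod dB < dB" "j mod dB < dB" using dB by auto
  have "(\<Sum>y\<in>{..<2} \<times> {..<dA} \<times> {..<dB}. \<Sum>s<2. Kmeas dB w y s i * cnj (Kmeas dB w y s j))
    = (\<Sum>x<2. \<Sum>r<dA. \<Sum>p<dB. \<Sum>s<2. Kmeas dB w (x,r,p) s i * cnj (Kmeas dB w (x,r,p) s j))"
    by (rule sum3)
  also have "\<dots> = (\<Sum>x<2. \<Sum>r<dA. \<Sum>p<dB. if p = i mod dB then (if p = j mod dB then Mm w x r (i div dB) * cnj (Mm w x r (j div dB)) else 0) else 0)"
  proof (intro sum.cong refl)
    fix x r p assume x: "x \<in> {..<2::nat}"
    have "(\<Sum>s<2. Kmeas dB w (x,r,p) s i * cnj (Kmeas dB w (x,r,p) s j))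
      = (\<Sum>s<2. if s = x then (if p = i mod dB then (if p = j mod dB then Mm w x r (i div dB) * cnj (Mm w x r (j div dB)) else 0) else 0) else 0)"
      unfolding Kmeas_def by (intro sum.cong refl) auto
    also have "\<dots> = (if p = i mod dB then (if p = j mod dB then Mm w x r (i div dB) * cnj (Mm w x r (j div dB)) else 0) else 0)"
      using x by (simp add: sum.delta)
    finally show "(\<Sum>s<2. Kmeas dB w (x,r,p) s i * cnj (Kmeas dB w (x,r,p) s j))
      = (if p = i mod dB then (if p = j mod dB then Mm w x r (i div dB) * cnj (Mm w x r (j div dB)) else 0) else 0)" .
  qed
  also have "\<dots> = (\<Sum>x<2. \<Sum>r<dA. if i mod dB = j mod dB then Mm w x r (i div dB) * cnj (Mm w x r (j div dB)) else 0)"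
    using m by (intro sum.cong refl) (simp add: sum.delta')
  also have "\<dots> = (if i mod dB = j mod dB then (\<Sum>x<2. \<Sum>r<dA. Mm w x r (i div dB) * cnj (Mm w x r (j div dB))) else 0)"
    by (simp add: sum_if_const)
  also have "\<dots> = (if i mod dB = j mod dB then (if i div dB = j div dB then 1 else 0) else 0)"
    using Msum[OF n1 d] by simp
  also have "\<dots> = (if i = j then 1 else 0)"
    by (metis div_mult_mod_eq)
  finally show "(\<Sum>y\<in>{..<2} \<times> {..<dA} \<times> {..<dB}. \<Sum>s<2. Kmeas dB w y s i * cnj (Kmeas dB w y s j)) = (if i = j then 1 else 0)" .
qed simp

lemma kron_index2:
  assumes "Z \<in> carrier_mat dA dA" "\<rho> \<in> carrier_mat dB dB" "a < dA" "q < dB" "b < dA" "q' < dB"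
  shows "kron Z \<rho> $$ (a*dB+q, b*dB+q') = Z $$ (a,b) * \<rho> $$ (q,q')"
  using kron_index[OF assms(1,2) lt_mult_add[OF assms(3,4)] lt_mult_add[OF assms(5,6)]] assms by simp

lemma Fmeas_kron:
  assumes Z: "Z \<in> carrier_mat dA dA" and R: "\<rho> \<in> carrier_mat dB dB" and st: "s < 2" "t < 2"
  shows "Fmeas dA dB w (kron Z \<rho>) $$ (s,t) =
    (if s = t then (\<Sum>r<dA. \<Sum>a<dA. \<Sum>b<dA. Mm w s r a * Z $$ (a,b) * cnj (Mm w s r b)) * mtrace \<rho> else 0)"
proof -
  let ?C = "\<lambda>x r. \<Sum>a<dA. \<Sum>b<dA. Mm w x r a * Z $$ (a,b) * cnj (Mm w x r b)"
  have "Fmeas dA dB w (kron Z \<rho>) $$ (s,t) = (\<Sum>y\<in>{..<2} \<times> {..<dA} \<times> {..<dB}. \<Sum>i<dA*dB. \<Sum>j<dA*dB.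
      Kmeas dB w y s i * kron Z \<rho> $$ (i,j) * cnj (Kmeas dB w y t j))"
    unfolding Fmeas_def using st by simp
  also have "\<dots> = (\<Sum>x<2. \<Sum>r<dA. \<Sum>p<dB. \<Sum>i<dA*dB. \<Sum>j<dA*dB.
      Kmeas dB w (x,r,p) s i * kron Z \<rho> $$ (i,j) * cnj (Kmeas dB w (x,r,p) t j))"
    by (rule sum3)
  also have "\<dots> = (\<Sum>x<2. \<Sum>r<dA. \<Sum>p<dB. if x = s \<and> x = t then ?C x r * \<rho> $$ (p,p) else 0)"
  proof (intro sum.cong refl)
    fix x r p assume p: "p \<in> {..<dB}"
    have "(\<Sum>i<dA*dB. \<Sum>j<dA*dB. Kmeas dB w (x,r,p) s i * kron Z \<rho> $$ (i,j) * cnj (Kmeas dB w (x,r,p) t j))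
      = (\<Sum>a<dA. \<Sum>q<dB. \<Sum>b<dA. \<Sum>q'<dB. Kmeas dB w (x,r,p) s (a*dB+q) * kron Z \<rho> $$ (a*dB+q,b*dB+q') * cnj (Kmeas dB w (x,r,p) t (b*dB+q')))"
      unfolding sum_split_mult ..
    also have "\<dots> = (\<Sum>a<dA. \<Sum>q<dB. \<Sum>b<dA. \<Sum>q'<dB. if q' = p then (if q = p then (if x = s \<and> x = t then Mm w x r a * Z $$ (a,b) * cnj (Mm w x r b) * \<rho> $$ (p,p) else 0) else 0) else 0)"
      using Z R by (intro sum.cong refl) (auto simp: Kmeas_idx kron_index2)
    also have "\<dots> = (\<Sum>a<dA. \<Sum>q<dB. \<Sum>b<dA. if q = p then (if x = s \<and> x = t then Mm w x r a * Z $$ (a,b) * cnj (Mm w x r b) * \<rho> $$ (p,p) else 0) else 0)"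
      using p by (intro sum.cong refl) (simp add: sum.delta)
    also have "\<dots> = (\<Sum>a<dA. \<Sum>q<dB. if q = p then (\<Sum>b<dA. if x = s \<and> x = t then Mm w x r a * Z $$ (a,b) * cnj (Mm w x r b) * \<rho> $$ (p,p) else 0) else 0)"
      by (intro sum.cong refl) (rule sum_if_const)
    also have "\<dots> = (\<Sum>a<dA. (\<Sum>b<dA. if x = s \<and> x = t then Mm w x r a * Z $$ (a,b) * cnj (Mm w x r b) * \<rho> $$ (p,p) else 0))"
      using p by (intro sum.cong[OF refl]) (simp add: sum.delta)
    also have "\<dots> = (if x = s \<and> x = t then ?C x r * \<rho> $$ (p,p) else 0)"
      by (simp add: sum_if_const sum_distrib_right)
    finally show "(\<Sum>i<dA*dB. \<Sum>j<dA*dB. Kmeas dB w (x,r,p) s i * kron Z \<rho> $$ (i,j) * cnj (Kmeas dB w (x,r,p) t j))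
      = (if x = s \<and> x = t then ?C x r * \<rho> $$ (p,p) else 0)" .
  qed
  also have "\<dots> = (\<Sum>x<2. if x = s then (if s = t then (\<Sum>r<dA. \<Sum>p<dB. ?C s r * \<rho> $$ (p,p)) else 0) else 0)"
    by (intro sum.cong refl) (auto simp: sum_if_const)
  also have "\<dots> = (if s = t then (\<Sum>r<dA. \<Sum>p<dB. ?C s r * \<rho> $$ (p,p)) else 0)"
    using st by (simp add: sum.delta')
  also have "(\<Sum>r<dA. \<Sum>p<dB. ?C s r * \<rho> $$ (p,p)) = (\<Sum>r<dA. ?C s r * (\<Sum>p<dB. \<rho> $$ (p,p)))"
    by (simp only: sum_distrib_left)
  also have "\<dots> = (\<Sum>r<dA. ?C s r) * (\<Sum>p<dB. \<rho> $$ (p,p))"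
    by (rule sum_distrib_right[symmetric])
  also have "(\<Sum>p<dB. \<rho> $$ (p,p)) = mtrace \<rho>"
    using R by (simp add: mtrace_def)
  finally show ?thesis .
qed



lemma mat22_dsum:
  assumes "M \<in> carrier_mat 2 2" "M $$ (0,1) = 0" "M $$ (1,0) = 0"
  shows "M = dsum (mat 1 1 (\<lambda>_. M $$ (0,0))) (mat 1 1 (\<lambda>_. M $$ (1,1)))"
proof (rule eq_matI)
  fix i j assume "i < dim_row (dsum (mat 1 1 (\<lambda>_. M $$ (0,0))) (mat 1 1 (\<lambda>_. M $$ (1,1))))"
    "j < dim_col (dsum (mat 1 1 (\<lambda>_. M $$ (0,0))) (mat 1 1 (\<lambda>_. M $$ (1,1))))"
  then have ij: "i < 2" "j < 2" unfolding dsum_def by auto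
  have e: "dsum (mat 1 1 (\<lambda>_. M $$ (0,0))) (mat 1 1 (\<lambda>_. M $$ (1,1))) $$ (i,j) =
    (if i < 1 \<and> j < 1 then M $$ (0,0) else if 1 \<le> i \<and> 1 \<le> j then M $$ (1,1) else 0)"
    using ij by (subst dsum_index[where n=1 and m=1]) auto
  show "M $$ (i,j) = dsum (mat 1 1 (\<lambda>_. M $$ (0,0))) (mat 1 1 (\<lambda>_. M $$ (1,1))) $$ (i,j)"
    unfolding e using ij assms by (cases i; cases j) (auto simp: less_2_cases_iff)
qed (use assms in \<open>auto simp: dsum_def\<close>)

lemma zero11: "mat 1 1 (\<lambda>_. 0) = (0\<^sub>m 1 1 :: complex mat)"
  by (rule eq_matI) auto

lemma val_ket:
  assumes n1: "(\<Sum>i<dA. w i * cnj (w i)) = 1"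
  shows "(\<Sum>r<dA. \<Sum>a<dA. \<Sum>b<dA. Mm w 0 r a * (w a * cnj (w b)) * cnj (Mm w 0 r b)) = 1"
proof -
  have "(\<Sum>r<dA. \<Sum>a<dA. \<Sum>b<dA. Mm w 0 r a * (w a * cnj (w b)) * cnj (Mm w 0 r b))
    = (\<Sum>r<dA. \<Sum>a<dA. \<Sum>b<dA. (w r * cnj (w r)) * ((w a * cnj (w a)) * (w b * cnj (w b))))"
    unfolding Mm_def by (intro sum.cong refl) (simp add: ac_simps)
  also have "\<dots> = (\<Sum>r<dA. (w r * cnj (w r)) * (\<Sum>a<dA. (w a * cnj (w a)) * (\<Sum>b<dA. w b * cnj (w b))))"
    by (simp only: sum_distrib_left)
  also have "\<dots> = 1" using n1 by (simp flip: sum_distrib_left)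
  finally show ?thesis .
qed

lemma val_one:
  assumes n1: "(\<Sum>i<dA. w i * cnj (w i)) = 1"
  shows "(\<Sum>r<dA. \<Sum>a<dA. \<Sum>b<dA. Mm w 0 r a * (1\<^sub>m dA $$ (a,b)) * cnj (Mm w 0 r b)) = 1"
proof -
  have "(\<Sum>r<dA. \<Sum>a<dA. \<Sum>b<dA. Mm w 0 r a * (1\<^sub>m dA $$ (a,b)) * cnj (Mm w 0 r b))
    = (\<Sum>r<dA. \<Sum>a<dA. \<Sum>b<dA. if b = a then Mm w 0 r a * cnj (Mm w 0 r b) else 0)"
    by (intro sum.cong refl) auto
  also have "\<dots> = (\<Sum>r<dA. \<Sum>a<dA. (w r * cnj (w r)) * (w a * cnj (w a)))"
    unfolding Mm_def by (intro sum.cong refl) (simp add: sum.delta ac_simps)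
  also have "\<dots> = (\<Sum>r<dA. (w r * cnj (w r)) * (\<Sum>a<dA. w a * cnj (w a)))"
    by (simp add: sum_distrib_left)
  also have "\<dots> = 1" using n1 by simp
  finally show ?thesis .
qed

lemma qf2_11: "M \<in> carrier_mat 2 2 \<Longrightarrow> qf 2 M (vec 2 (\<lambda>i. if i = 1 then 1 else 0)) = M $$ (1,1)"
  unfolding qf_def by (simp add: numeral_2_eq_2)

lemma mtrace2: "M \<in> carrier_mat 2 2 \<Longrightarrow> mtrace M = M $$ (0,0) + M $$ (1,1)"
  unfolding mtrace_def by (simp add: numeral_2_eq_2)

lemma meas_lower:
  assumes DK: "rel_K_entropy b D" and pos: "0 < dA" "0 < dB"
    and psi: "\<psi> \<in> carrier_vec dA" and n1: "(\<Sum>i<dA. \<psi> $ i * cnj (\<psi> $ i)) = 1"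
    and rho: "density dB \<rho>" and sig: "density dB \<sigma>"
  shows "0 \<le> D (kron (ketbra \<psi>) \<rho>) (kron (1\<^sub>m dA) \<sigma>)"
proof -
  define w where "w = (\<lambda>i. \<psi> $ i)"
  have n1w: "(\<Sum>i<dA. w i * cnj (w i)) = 1" using n1 unfolding w_def by simp
  have rp: "psd dB \<rho>" and rt: "mtrace \<rho> = 1" using rho unfolding density_def by auto
  have rc: "\<rho> \<in> carrier_mat dB dB" using rp unfolding psd_def by simp
  have sp: "psd dB \<sigma>" and st: "mtrace \<sigma> = 1" using sig unfolding density_def by auto
  have sc: "\<sigma> \<in> carrier_mat dB dB" using sp unfolding psd_def by simp
  let ?S = "kron (ketbra \<psi>) \<rho>" and ?T = "kron (1\<^sub>m dA) \<sigma>" and ?E = "Fmeas dA dB w"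
  have Sp: "psd (dA*dB) ?S" by (rule psd_S[OF psi rp])
  have Tp: "psd (dA*dB) ?T" by (rule psd_1[OF sp])
  have Sc: "?S \<in> carrier_mat (dA*dB) (dA*dB)" using Sp unfolding psd_def by simp
  have cp: "cptp (dA*dB) 2 ?E" by (rule Fmeas_cptp[OF n1w])
  have N: "0 < dA*dB" using pos by simp
  have ESc: "?E ?S \<in> carrier_mat 2 2" and ETc: "?E ?T \<in> carrier_mat 2 2" unfolding Fmeas_def by auto
  have ES: "?E ?S $$ (s,t) = (if s = t then (\<Sum>r<dA. \<Sum>a<dA. \<Sum>b<dA. Mm w s r a * ketbra \<psi> $$ (a,b) * cnj (Mm w s r b)) else 0)"
    if "s < 2" "t < 2" for s t
    using Fmeas_kron[OF ketbra_carrier[OF psi] rc that] rt by simp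
  have ET: "?E ?T $$ (s,t) = (if s = t then (\<Sum>r<dA. \<Sum>a<dA. \<Sum>b<dA. Mm w s r a * 1\<^sub>m dA $$ (a,b) * cnj (Mm w s r b)) else 0)"
    if "s < 2" "t < 2" for s t
    using Fmeas_kron[OF one_carrier_mat sc that] st by simp
  have kb: "(\<Sum>r<dA. \<Sum>a<dA. \<Sum>b<dA. Mm w 0 r a * ketbra \<psi> $$ (a,b) * cnj (Mm w 0 r b)) = 1"
  proof -
    have "(\<Sum>r<dA. \<Sum>a<dA. \<Sum>b<dA. Mm w 0 r a * ketbra \<psi> $$ (a,b) * cnj (Mm w 0 r b))
      = (\<Sum>r<dA. \<Sum>a<dA. \<Sum>b<dA. Mm w 0 r a * (w a * cnj (w b)) * cnj (Mm w 0 r b))"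
      using psi by (intro sum.cong refl) (simp add: ketbra_index w_def)
    then show ?thesis using val_ket[OF n1w] by simp
  qed
  have ES00: "?E ?S $$ (0,0) = 1" using ES[of 0 0] kb by simp
  have ES11: "?E ?S $$ (1,1) = 0"
  proof -
    have "mtrace (?E ?S) = mtrace ?S" using cp Sc unfolding cptp_def by blast
    also have "\<dots> = 1" by (rule mtrace_kron_ketbra[OF psi rc n1 rt])
    finally show ?thesis using mtrace2[OF ESc] ES00 by simp
  qed
  have eS: "?E ?S = dsum (1\<^sub>m 1) (0\<^sub>m 1 1)"
    using mat22_dsum[OF ESc] ES[of 0 1] ES[of 1 0] ES00 ES11 one11 zero11 by simp
  have ET00: "?E ?T $$ (0,0) = 1" using ET[of 0 0] val_one[OF n1w] by simp
  define c where "c = ?E ?T $$ (1,1)"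
  have eT: "?E ?T = dsum (1\<^sub>m 1) (mat 1 1 (\<lambda>_. c))"
    using mat22_dsum[OF ETc] ET[of 0 1] ET[of 1 0] ET00 one11 unfolding c_def by simp
  have pET: "psd 2 (?E ?T)" unfolding Fmeas_def by (rule kmap_psd[OF _ Tp]) simp
  have "Im c = 0 \<and> Re c \<ge> 0"
    using pET qf2_11[OF ETc] unfolding psd_qf c_def by (metis vec_carrier)
  then have pc: "psd 1 (mat 1 1 (\<lambda>_. c))" using psd_scalar by blast
  have p1: "psd 1 (1\<^sub>m 1)" using density_one unfolding density_def by simp
  have "D (?E ?S) (?E ?T) = D (1\<^sub>m 1) (1\<^sub>m 1)"
    unfolding eS eT by (rule ax_b[OF DK _ p1 p1 pc]) simp
  also have "\<dots> = 0" by (rule ax_d[OF DK density_one])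
  finally have "D (?E ?S) (?E ?T) = 0" .
  moreover have "D (?E ?S) (?E ?T) \<le> D ?S ?T" by (rule ax_a[OF DK N cp Sp Tp])
  ultimately show ?thesis by simp
qed

lemma meas_upper:
  assumes DK: "rel_K_entropy b D" and pos: "0 < dA" "0 < dB"
    and psi: "\<psi> \<in> carrier_vec dA" and n1: "(\<Sum>i<dA. \<psi> $ i * cnj (\<psi> $ i)) = 1"
    and rho: "density dB \<rho>"
  shows "D (kron (ketbra \<psi>) \<rho>) (kron (1\<^sub>m dA) \<rho>) \<le> 0"
proof -
  have rp: "psd dB \<rho>" and rt: "mtrace \<rho> = 1" using rho unfolding density_def by auto
  have rc: "\<rho> \<in> carrier_mat dB dB" using rp unfolding psd_def by simp
  have Sp: "psd (dA*dB) (kron (ketbra \<psi>) \<rho>)" by (rule psd_S[OF psi rp])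
  have Qp: "psd (dA*dB) (kron (Qm \<psi>) \<rho>)" by (rule psd_Q[OF psi rp n1])
  have N: "0 < dA*dB" using pos by simp
  have dS: "density (dA*dB) (kron (ketbra \<psi>) \<rho>)"
    unfolding density_def using Sp mtrace_kron_ketbra[OF psi rc n1 rt] by simp
  have "D (kron (ketbra \<psi>) \<rho>) (kron (1\<^sub>m dA) \<rho>) = D (kron (ketbra \<psi>) \<rho>) (kron (ketbra \<psi>) \<rho> + kron (Qm \<psi>) \<rho>)"
    using kron_sum[OF psi rc] by simp
  also have "\<dots> \<le> D (kron (ketbra \<psi>) \<rho>) (kron (ketbra \<psi>) \<rho>)" by (rule D_mono[OF DK N Sp Sp Qp])
  also have "\<dots> = 0" by (rule ax_d[OF DK dS])
  finally show ?thesis .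
qed

lemma part1:
  assumes DK: "rel_K_entropy b D" and HK: "H = condK1 D \<or> H = condK2 D"
    and psi: "\<psi> \<in> carrier_vec dA" and nrm: "(\<Sum>i<dA. (cmod (\<psi> $ i))\<^sup>2) = 1"
    and rho: "density dB \<rho>"
  shows "H dA dB (kron (ketbra \<psi>) \<rho>) = 0"
proof -
  have n1: "(\<Sum>i<dA. \<psi> $ i * cnj (\<psi> $ i)) = 1" by (rule norm1[OF nrm])
  have pA: "0 < dA" using nrm by (cases dA) auto
  have rp: "psd dB \<rho>" and rt: "mtrace \<rho> = 1" using rho unfolding density_def by auto
  have rc: "\<rho> \<in> carrier_mat dB dB" using rp unfolding psd_def by simp
  have pB: "0 < dB" using rt rc unfolding mtrace_def by (cases dB) auto
  have ge: "0 \<le> D (kron (ketbra \<psi>) \<rho>) (kron (1\<^sub>m dA) \<sigma>)" if "density dB \<sigma>" for \<sigma>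
    by (rule meas_lower[OF DK pA pB psi n1 rho that])
  have le: "D (kron (ketbra \<psi>) \<rho>) (kron (1\<^sub>m dA) \<rho>) \<le> 0"
    by (rule meas_upper[OF DK pA pB psi n1 rho])
  have eq: "D (kron (ketbra \<psi>) \<rho>) (kron (1\<^sub>m dA) \<rho>) = 0" using ge[OF rho] le by simp
  from HK show ?thesis
  proof
    assume "H = condK1 D"
    then show ?thesis unfolding condK1_def using eq ptrace_kron_ketbra[OF psi rc n1] by simp
  next
    assume H2: "H = condK2 D"
    have "(SUP \<sigma> \<in> {\<sigma>. density dB \<sigma>}. - D (kron (ketbra \<psi>) \<rho>) (kron (1\<^sub>m dA) \<sigma>)) \<le> 0"
    proof (rule SUP_least)
      fix \<sigma> assume "\<sigma> \<in> {\<sigma>. density dB \<sigma>}"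
      then show "- D (kron (ketbra \<psi>) \<rho>) (kron (1\<^sub>m dA) \<sigma>) \<le> 0" using ge by (simp add: ereal_uminus_le_reorder)
    qed
    moreover have "0 \<le> (SUP \<sigma> \<in> {\<sigma>. density dB \<sigma>}. - D (kron (ketbra \<psi>) \<rho>) (kron (1\<^sub>m dA) \<sigma>))"
      by (rule SUP_upper2[of \<rho>]) (use rho eq in auto)
    ultimately show ?thesis unfolding H2 condK2_def by simp
  qed
qed

theorem lemma9:
  fixes b :: real and D :: "complex mat \<Rightarrow> complex mat \<Rightarrow> ereal"
    and H :: "nat \<Rightarrow> nat \<Rightarrow> complex mat \<Rightarrow> ereal"
  assumes base: "0 < b" "b \<noteq> 1"
    and DK: "rel_K_entropy b D"
    and HK: "H = condK1 D \<or> H = condK2 D"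
  shows "(\<forall>dA dB (\<psi>::complex vec) \<rho>B.
            \<psi> \<in> carrier_vec dA \<longrightarrow> (\<Sum>i<dA. (cmod (\<psi> $ i))\<^sup>2) = 1 \<longrightarrow> density dB \<rho>B \<longrightarrow>
            H dA dB (kron (ketbra \<psi>) \<rho>B) = 0)
       \<and> (\<forall>dA dB \<rho>. 0 < dA \<longrightarrow> 0 < dB \<longrightarrow> density (dA * dB) \<rho> \<longrightarrow>
            H dA dB \<rho> \<le> ereal (log b (real dA)))"
  using part1[OF DK HK] part2[OF DK HK] by blast

end
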